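(* The critical cardinalities of $\mathrm{Split}(B_\Omega,B_\Lambda)$, $\mathrm{Split}(\Omega,\Lambda)$ and $\mathrm{Split}(C_\Omega,C_\Lambda)$ are all equal to $\mathfrak u$; that is, for each of these three properties, $\mathfrak u$ is the minimal cardinality of a set of reals not satisfying it.
   Context: A set of reals is an infinite topological space homeomorphic to a subset of $\mathbb R$. A cover of a space $X$ is a family $\mathcal U$ of subsets of $X$ with $\bigcup\mathcal U=X$ such that $X\not\subseteq U$ for every $U\in\mathcal U$. A cover is a large cover if every $x\in X$ lies in infinitely many members; an $\omega$-cover if every finite subset of $X$ is contained in some member. $\Lambda,\Omega$ denote the collections of open large covers and open $\omega$-covers of $X$; $B_\Lambda,B_\Omega$ the collections of countable such covers by Borel sets; $C_\Lambda,C_\Omega$ the collections of countable such covers by clopen sets. $X$ satisfies $\mathrm{Split}(\mathfrak U,\mathfrak V)$ if every $\mathcal U\in\mathfrak U$ can be partitioned into two disjoint subfamilies each containing a subfamily belonging to $\mathfrak V$. $\mathfrak u$ is the minimal cardinality of a family $B$ of infinite subsets of $\mathbb N$ which is a base for a nonprincipal ultrafilter $U$ on $\mathbb N$, i.e. $U=\{a\subseteq\mathbb N: \exists b\in B\ (b\setminus a \text{ finite})\}$. *)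

theory Defs
  imports "HOL-Analysis.Analysis"
begin

text \<open>Sets of reals are taken to be infinite subsets X of the real line with the
subspace topology (all notions below are topological invariants).\<close>

definition is_cover :: "real set \<Rightarrow> real set set \<Rightarrow> bool" where
  "is_cover X \<U> \<longleftrightarrow> (\<forall>U\<in>\<U>. U \<subseteq> X) \<and> \<Union>\<U> = X \<and> (\<forall>U\<in>\<U>. \<not> X \<subseteq> U)"

definition large_cover :: "real set \<Rightarrow> real set set \<Rightarrow> bool" where
  "large_cover X \<U> \<longleftrightarrow> is_cover X \<U> \<and> (\<forall>x\<in>X. infinite {U\<in>\<U>. x \<in> U})"

definition omega_cover :: "real set \<Rightarrow> real set set \<Rightarrow> bool" where
  "omega_cover X \<U> \<longleftrightarrow> is_cover X \<U> \<and> (\<forall>F. finite F \<and> F \<subseteq> X \<longrightarrow> (\<exists>U\<in>\<U>. F \<subseteq> U))"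

text \<open>Borel sets of X: members of
the Borel sigma-algebra of the subspace X, i.e. traces on X of Borel subsets of the reals.\<close>

definition open_fam :: "real set \<Rightarrow> real set set \<Rightarrow> bool" where
  "open_fam X \<U> \<longleftrightarrow> (\<forall>U\<in>\<U>. openin (top_of_set X) U)"

definition borel_fam :: "real set \<Rightarrow> real set set \<Rightarrow> bool" where
  "borel_fam X \<U> \<longleftrightarrow> (\<forall>U\<in>\<U>. U \<in> sets (restrict_space borel X))"

definition clopen_fam :: "real set \<Rightarrow> real set set \<Rightarrow> bool" where
  "clopen_fam X \<U> \<longleftrightarrow> (\<forall>U\<in>\<U>. openin (top_of_set X) U \<and> closedin (top_of_set X) U)"

definition Lambda_covers :: "real set \<Rightarrow> real set set \<Rightarrow> bool" where
  "Lambda_covers X \<U> \<longleftrightarrow> large_cover X \<U> \<and> open_fam X \<U>"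

definition Omega_covers :: "real set \<Rightarrow> real set set \<Rightarrow> bool" where
  "Omega_covers X \<U> \<longleftrightarrow> omega_cover X \<U> \<and> open_fam X \<U>"

definition B_Lambda :: "real set \<Rightarrow> real set set \<Rightarrow> bool" where
  "B_Lambda X \<U> \<longleftrightarrow> large_cover X \<U> \<and> countable \<U> \<and> borel_fam X \<U>"

definition B_Omega :: "real set \<Rightarrow> real set set \<Rightarrow> bool" where
  "B_Omega X \<U> \<longleftrightarrow> omega_cover X \<U> \<and> countable \<U> \<and> borel_fam X \<U>"

definition C_Lambda :: "real set \<Rightarrow> real set set \<Rightarrow> bool" where
  "C_Lambda X \<U> \<longleftrightarrow> large_cover X \<U> \<and> countable \<U> \<and> clopen_fam X \<U>"

definition C_Omega :: "real set \<Rightarrow> real set set \<Rightarrow> bool" where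
  "C_Omega X \<U> \<longleftrightarrow> omega_cover X \<U> \<and> countable \<U> \<and> clopen_fam X \<U>"

definition Split ::
  "(real set \<Rightarrow> real set set \<Rightarrow> bool) \<Rightarrow> (real set \<Rightarrow> real set set \<Rightarrow> bool) \<Rightarrow> real set \<Rightarrow> bool" where
  "Split \<UU> \<VV> X \<longleftrightarrow> (\<forall>\<U>. \<UU> X \<U> \<longrightarrow>
      (\<exists>\<A> \<B>. \<A> \<union> \<B> = \<U> \<and> \<A> \<inter> \<B> = {} \<and>
              (\<exists>\<A>'\<subseteq>\<A>. \<VV> X \<A>') \<and> (\<exists>\<B>'\<subseteq>\<B>. \<VV> X \<B>')))"

definition nonprincipal_ultrafilter :: "nat set set \<Rightarrow> bool" where
  "nonprincipal_ultrafilter U \<longleftrightarrow>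
     {} \<notin> U \<and> UNIV \<in> U \<and>
     (\<forall>a b. a \<in> U \<and> a \<subseteq> b \<longrightarrow> b \<in> U) \<and>
     (\<forall>a b. a \<in> U \<and> b \<in> U \<longrightarrow> a \<inter> b \<in> U) \<and>
     (\<forall>a. a \<in> U \<or> - a \<in> U) \<and>
     (\<forall>n. {n} \<notin> U)"

definition ultrafilter_base :: "nat set set \<Rightarrow> bool" where
  "ultrafilter_base B \<longleftrightarrow> (\<forall>b\<in>B. infinite b) \<and>
     nonprincipal_ultrafilter {a. \<exists>b\<in>B. finite (b - a)}"

text \<open>B has cardinality \<mathfrak>u: a base of a nonprincipal ultrafilter of minimal cardinality.\<close>
definition u_witness :: "nat set set \<Rightarrow> bool" where
  "u_witness B \<longleftrightarrow> ultrafilter_base B \<and> (\<forall>B'. ultrafilter_base B' \<longrightarrow> (card_of B, card_of B') \<in> ordLeq)"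

definition critical_card_is_u :: "(real set \<Rightarrow> bool) \<Rightarrow> bool" where
  "critical_card_is_u P \<longleftrightarrow> (\<exists>B. u_witness B \<and>
      (\<exists>X. infinite X \<and> \<not> P X \<and> (card_of X, card_of B) \<in> ordIso) \<and>
      (\<forall>X. infinite X \<and> \<not> P X \<longrightarrow> (card_of B, card_of X) \<in> ordLeq))"

end

theory Submission
  imports Defs "HOL-Algebra.Free_Abelian_Groups"
begin


definition filt_ok :: "nat set set \<Rightarrow> bool" where
  "filt_ok F \<longleftrightarrow> {a. finite (- a)} \<subseteq> F \<and> {} \<notin> F \<and>
     (\<forall>a b. a \<in> F \<and> a \<subseteq> b \<longrightarrow> b \<in> F) \<and> (\<forall>a b. a \<in> F \<and> b \<in> F \<longrightarrow> a \<inter> b \<in> F)"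

lemma cofin_ok: "filt_ok {a. finite (- a)}"
  unfolding filt_ok_def
  by (auto simp: Compl_Int intro: finite_subset)

lemma exists_npuf: "\<exists>U. nonprincipal_ultrafilter U"
proof -
  let ?A = "{F. filt_ok F}"
  have "\<exists>M\<in>?A. \<forall>X\<in>?A. M \<subseteq> X \<longrightarrow> X = M"
  proof (rule subset_Zorn)
    fix C assume ch: "subset.chain ?A C"
    show "\<exists>U\<in>?A. \<forall>X\<in>C. X \<subseteq> U"
    proof (cases "C = {}")
      case True
      then show ?thesis using cofin_ok by auto
    next
      case False
      have CA: "C \<subseteq> ?A" and lin: "\<And>X Y. X \<in> C \<Longrightarrow> Y \<in> C \<Longrightarrow> X \<subseteq> Y \<or> Y \<subseteq> X"
        using ch unfolding subset.chain_def by auto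
      have "filt_ok (\<Union>C)"
        unfolding filt_ok_def
      proof (intro conjI allI impI)
        show "{a. finite (- a)} \<subseteq> \<Union>C" using False CA unfolding filt_ok_def by blast
        show "{} \<notin> \<Union>C" using CA unfolding filt_ok_def by blast
      next
        fix a b assume "a \<in> \<Union>C \<and> a \<subseteq> b"
        then show "b \<in> \<Union>C" using CA unfolding filt_ok_def by blast
      next
        fix a b assume ab: "a \<in> \<Union>C \<and> b \<in> \<Union>C"
        then obtain X Y where X: "X \<in> C" "a \<in> X" and Y: "Y \<in> C" "b \<in> Y" by blast
        show "a \<inter> b \<in> \<Union>C"
        proof (cases "X \<subseteq> Y")
          case True
          then show ?thesis using X Y CA unfolding filt_ok_def by blast
        next
          case False
          then have "Y \<subseteq> X" using lin X Y by blast
          then show ?thesis using X Y CA unfolding filt_ok_def by blast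
        qed
      qed
      then show ?thesis by blast
    qed
  qed
  then obtain M where M: "filt_ok M" and max: "\<And>X. filt_ok X \<Longrightarrow> M \<subseteq> X \<Longrightarrow> X = M" by blast
  have ultra: "a \<in> M \<or> - a \<in> M" for a
  proof (rule ccontr)
    assume na: "\<not> (a \<in> M \<or> - a \<in> M)"
    let ?M' = "{c. \<exists>m\<in>M. m \<inter> a \<subseteq> c}"
    have "{} \<notin> ?M'"
    proof
      assume "{} \<in> ?M'"
      then obtain m where "m \<in> M" "m \<inter> a = {}" by blast
      then have "m \<subseteq> - a" by blast
      then show False using na M \<open>m \<in> M\<close> unfolding filt_ok_def by blast
    qed
    moreover have "M \<subseteq> ?M'" by blast
    moreover have "filt_ok ?M'"
      unfolding filt_ok_def
    proof (intro conjI allI impI)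
      show "{a. finite (- a)} \<subseteq> ?M'" using M unfolding filt_ok_def by blast
      show "{} \<notin> ?M'" by fact
    next
      fix x y assume "x \<in> ?M' \<and> x \<subseteq> y" then show "y \<in> ?M'" by blast
    next
      fix x y assume "x \<in> ?M' \<and> y \<in> ?M'"
      then obtain m1 m2 where "m1 \<in> M" "m1 \<inter> a \<subseteq> x" "m2 \<in> M" "m2 \<inter> a \<subseteq> y" by blast
      moreover have "m1 \<inter> m2 \<in> M" using M calculation unfolding filt_ok_def by blast
      ultimately show "x \<inter> y \<in> ?M'" by blast
    qed
    ultimately have "?M' = M" using max by blast
    moreover have "UNIV \<in> M" using M unfolding filt_ok_def by auto
    then have "a \<in> ?M'" by blast
    ultimately show False using na by blast
  qed
  have "nonprincipal_ultrafilter M"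
    unfolding nonprincipal_ultrafilter_def
  proof (intro conjI allI impI)
    show "{} \<notin> M" "UNIV \<in> M" using M unfolding filt_ok_def by auto
    show "\<And>a b. a \<in> M \<and> a \<subseteq> b \<Longrightarrow> b \<in> M" "\<And>a b. a \<in> M \<and> b \<in> M \<Longrightarrow> a \<inter> b \<in> M"
      using M unfolding filt_ok_def by blast+
    show "\<And>a. a \<in> M \<or> - a \<in> M" by (rule ultra)
  next
    fix n
    show "{n} \<notin> M"
    proof
      assume "{n} \<in> M"
      moreover have "- {n} \<in> M" using M unfolding filt_ok_def by auto
      ultimately have "{n} \<inter> - {n} \<in> M" using M unfolding filt_ok_def by blast
      then show False using M unfolding filt_ok_def by auto
    qed
  qed
  then show ?thesis by blast
qed

lemma npuf_base: assumes "nonprincipal_ultrafilter U" shows "ultrafilter_base U"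
proof -
  have U: "{} \<notin> U" "\<And>a b. a \<in> U \<Longrightarrow> a \<subseteq> b \<Longrightarrow> b \<in> U" "\<And>a b. a \<in> U \<Longrightarrow> b \<in> U \<Longrightarrow> a \<inter> b \<in> U"
     "\<And>a. a \<in> U \<or> - a \<in> U" "\<And>n. {n} \<notin> U" "UNIV \<in> U"
    using assms unfolding nonprincipal_ultrafilter_def by blast+
  have fin: "finite a \<Longrightarrow> - a \<in> U" for a
  proof (induction a rule: finite_induct)
    case empty then show ?case using U by simp
  next
    case (insert x F)
    have "- {x} \<in> U" using U(4)[of "{x}"] U(5) by blast
    then have "- F \<inter> - {x} \<in> U" using insert U(3) by blast
    moreover have "- insert x F = - F \<inter> - {x}" by auto
    ultimately show ?case by simp
  qed
  have inf: "a \<in> U \<Longrightarrow> infinite a" for a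
  proof
    assume "a \<in> U" "finite a"
    then have "a \<inter> - a \<in> U" using fin U(3) by blast
    then show False using U(1) by simp
  qed
  have eq: "{a. \<exists>b\<in>U. finite (b - a)} = U"
  proof
    show "U \<subseteq> {a. \<exists>b\<in>U. finite (b - a)}"
    proof
      fix x assume "x \<in> U"
      then show "x \<in> {a. \<exists>b\<in>U. finite (b - a)}" by (intro CollectI bexI[of _ x]) auto
    qed
    show "{a. \<exists>b\<in>U. finite (b - a)} \<subseteq> U"
    proof
      fix a assume "a \<in> {a. \<exists>b\<in>U. finite (b - a)}"
      then obtain b where "b \<in> U" "finite (b - a)" by blast
      then have "b \<inter> - (b - a) \<in> U" using fin U(3) by blast
      then show "a \<in> U" using U(2) by blast
    qed
  qed
  have "ultrafilter_base U \<longleftrightarrow> (\<forall>b\<in>U. infinite b) \<and> nonprincipal_ultrafilter U"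
    by (simp only: ultrafilter_base_def eq)
  then show ?thesis using inf assms by blast
qed

lemma exists_u_witness: "\<exists>B. u_witness B"
proof -
  obtain U where "nonprincipal_ultrafilter U" using exists_npuf by blast
  then have U: "ultrafilter_base U" by (rule npuf_base)
  let ?S = "{|B| | B. ultrafilter_base B}"
  have "|U| \<in> ?S" using U by blast
  then obtain r where r: "r \<in> ?S" and min: "\<And>y. (y, r) \<in> ordLess \<Longrightarrow> y \<notin> ?S"
    by (rule wfE_min[OF wf_ordLess]) blast+
  then obtain B where B: "ultrafilter_base B" "r = |B|" by blast
  have "(card_of B, card_of B') \<in> ordLeq" if "ultrafilter_base B'" for B'
  proof -
    have "\<not> (card_of B', card_of B) \<in> ordLess" using min B that by blast
    then show ?thesis using ordLess_or_ordLeq[OF card_of_Well_order card_of_Well_order] by blast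
  qed
  then show ?thesis unfolding u_witness_def using B by blast
qed



lemma omega_facts:
  assumes "omega_cover X \<U>"
  shows "\<And>U. U \<in> \<U> \<Longrightarrow> U \<subseteq> X" "\<And>U. U \<in> \<U> \<Longrightarrow> \<not> X \<subseteq> U"
    "\<And>F. finite F \<Longrightarrow> F \<subseteq> X \<Longrightarrow> \<exists>U\<in>\<U>. F \<subseteq> U"
  using assms unfolding omega_cover_def is_cover_def by auto

lemma omega_cover_infinite:
  assumes om: "omega_cover X \<U>"
  shows "infinite \<U>"
proof
  assume fin: "finite \<U>"
  have "\<forall>U\<in>\<U>. \<exists>p. p \<in> X \<and> p \<notin> U" using omega_facts(1,2)[OF om] by blast
  then obtain p where p0: "\<forall>U\<in>\<U>. p U \<in> X \<and> p U \<notin> U" by (rule bchoice[elim_format]) blast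
  then have p: "\<And>U. U \<in> \<U> \<Longrightarrow> p U \<in> X \<and> p U \<notin> U" by blast
  have "finite (p ` \<U>)" using fin by simp
  moreover have "p ` \<U> \<subseteq> X" using p by blast
  ultimately obtain U where U: "U \<in> \<U>" "p ` \<U> \<subseteq> U" using omega_facts(3)[OF om] by blast
  then show False using p[OF U(1)] by blast
qed

lemma omega_infinite:
  assumes om: "omega_cover X \<U>" and F: "finite F" "F \<subseteq> X" and f: "\<And>n. f n \<in> \<U>"
    and sur: "\<U> \<subseteq> range f"
  shows "infinite {n. F \<subseteq> f n}"
proof
  assume fin: "finite {n. F \<subseteq> f n}"
  have "\<forall>n. \<exists>p. p \<in> X \<and> p \<notin> f n" using omega_facts(1,2)[OF om] f by blast
  then obtain p where p0: "\<forall>n. p n \<in> X \<and> p n \<notin> f n" by (rule choice[elim_format]) blast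
  then have p: "\<And>n. p n \<in> X \<and> p n \<notin> f n" by blast
  let ?F = "F \<union> p ` {n. F \<subseteq> f n}"
  have "finite ?F" using fin F by simp
  moreover have "?F \<subseteq> X" using F p by blast
  ultimately obtain U where U: "U \<in> \<U>" "?F \<subseteq> U" using omega_facts(3)[OF om] by blast
  then obtain m where m: "U = f m" using sur by blast
  then have "m \<in> {n. F \<subseteq> f n}" using U by blast
  then have "p m \<in> f m" using U m by blast
  then show False using p by blast
qed

lemma core:
  assumes uw: "u_witness B" and X: "infinite X" and om: "omega_cover X \<U>" and cnt: "countable \<U>"
    and nosplit: "\<not>(\<exists>\<A> \<B>. \<A> \<union> \<B> = \<U> \<and> \<A> \<inter> \<B> = {} \<and> large_cover X \<A> \<and> large_cover X \<B>)"
  shows "(card_of B, card_of X) \<in> ordLeq"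
proof -
  have inf: "infinite \<U>" using omega_cover_infinite[OF om] .
  obtain e where e: "bij_betw e \<U> (UNIV::nat set)"
    using countableE_infinite[OF cnt inf] by blast
  define f where "f = inv_into \<U> e"
  have f: "bij_betw f (UNIV::nat set) \<U>" unfolding f_def by (rule bij_betw_inv_into[OF e])
  have fU: "\<And>n. f n \<in> \<U>" and sur: "\<U> \<subseteq> range f" and inj: "inj f"
    using f unfolding bij_betw_def by auto
  have cov: "\<And>U. U \<in> \<U> \<Longrightarrow> U \<subseteq> X \<and> \<not> X \<subseteq> U"
    using omega_facts(1,2)[OF om] by blast
  have claim: "\<exists>x\<in>X. finite ({n. x \<in> f n} \<inter> A) \<or> finite ({n. x \<in> f n} - A)" for A
  proof (rule ccontr)
    assume "\<not> ?thesis"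
    then have h: "\<And>x. x \<in> X \<Longrightarrow> infinite ({n. x \<in> f n} \<inter> A) \<and> infinite ({n. x \<in> f n} - A)" by blast
    have lc: "large_cover X (f ` S)" if hS: "\<And>x. x \<in> X \<Longrightarrow> infinite ({n. x \<in> f n} \<inter> S)" for S
      unfolding large_cover_def is_cover_def
    proof (intro conjI ballI)
      show "U \<subseteq> X" "\<not> X \<subseteq> U" if "U \<in> f ` S" for U using cov fU that by blast+
      show "\<Union> (f ` S) = X"
      proof
        show "\<Union> (f ` S) \<subseteq> X" using cov fU by blast
        show "X \<subseteq> \<Union> (f ` S)"
        proof
          fix x assume "x \<in> X"
          then have "infinite ({n. x \<in> f n} \<inter> S)" by (rule hS)
          then obtain n where "n \<in> {n. x \<in> f n} \<inter> S" by (metis finite.emptyI ex_in_conv)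
          then show "x \<in> \<Union> (f ` S)" by blast
        qed
      qed
      fix x assume "x \<in> X"
      then have i: "infinite ({n. x \<in> f n} \<inter> S)" by (rule hS)
      have "f ` ({n. x \<in> f n} \<inter> S) \<subseteq> {U \<in> f ` S. x \<in> U}" by blast
      moreover have "infinite (f ` ({n. x \<in> f n} \<inter> S))"
        using finite_imageD[OF _ inj_on_subset[OF inj subset_UNIV]] i by blast
      ultimately show "infinite {U \<in> f ` S. x \<in> U}" using finite_subset by blast
    qed
    have "large_cover X (f ` A)" by (rule lc) (use h in blast)
    moreover have "large_cover X (f ` (- A))"
      by (rule lc) (use h in \<open>auto simp: Diff_eq\<close>)
    moreover have "f ` A \<union> f ` (- A) = f ` UNIV" using image_Un[of f A "- A"] by simp
    moreover have "f ` UNIV = \<U>" using f by (simp add: bij_betw_def)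
    moreover have "f ` A \<inter> f ` (- A) = {}" using image_Int[OF inj, of A "- A"] by simp
    ultimately have "\<exists>\<A> \<B>. \<A> \<union> \<B> = \<U> \<and> \<A> \<inter> \<B> = {} \<and> large_cover X \<A> \<and> large_cover X \<B>"
      by (intro exI[of _ "f ` A"] exI[of _ "f ` (- A)"]) simp
    then show False using nosplit by (rule notE[rotated])
  qed
  define FF where "FF = (\<lambda>F. {n. F \<subseteq> f n}) ` Fpow X"
  have FFinf: "\<And>b. b \<in> FF \<Longrightarrow> infinite b"
  proof -
    fix b assume "b \<in> FF"
    then obtain F where "F \<in> Fpow X" "b = {n. F \<subseteq> f n}" unfolding FF_def by blast
    then show "infinite b" using omega_infinite[OF om _ _ fU sur, of F] unfolding Fpow_def by blast
  qed
  have FFint: "b1 \<inter> b2 \<in> FF" if h1: "b1 \<in> FF" and h2: "b2 \<in> FF" for b1 b2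
  proof -
    obtain F1 F2 where "F1 \<in> Fpow X" "F2 \<in> Fpow X" "b1 = {n. F1 \<subseteq> f n}" "b2 = {n. F2 \<subseteq> f n}"
      using h1 h2 unfolding FF_def by blast
    moreover have "{n. F1 \<union> F2 \<subseteq> f n} = b1 \<inter> b2" using calculation by auto
    moreover have "F1 \<union> F2 \<in> Fpow X" using calculation unfolding Fpow_def by auto
    ultimately show ?thesis unfolding FF_def by (metis image_eqI)
  qed
  have sing: "{n. x \<in> f n} \<in> FF" if hx: "x \<in> X" for x
  proof -
    have "{x} \<in> Fpow X" using hx unfolding Fpow_def by auto
    moreover have "{n. {x} \<subseteq> f n} = {n. x \<in> f n}" by auto
    ultimately show ?thesis unfolding FF_def by (metis image_eqI)
  qed
  have UNIVFF: "UNIV \<in> FF"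
  proof -
    have "{} \<in> Fpow X" unfolding Fpow_def by auto
    moreover have "{n. {} \<subseteq> f n} = UNIV" by auto
    ultimately show ?thesis unfolding FF_def by (metis image_eqI)
  qed
  have "ultrafilter_base FF"
    unfolding ultrafilter_base_def nonprincipal_ultrafilter_def
  proof (intro conjI allI impI ballI)
    show "infinite b" if "b \<in> FF" for b using FFinf that .
    show "{} \<notin> {a. \<exists>b\<in>FF. finite (b - a)}" using FFinf by simp
    show "UNIV \<in> {a. \<exists>b\<in>FF. finite (b - a)}" using UNIVFF by (intro CollectI bexI[of _ UNIV]) auto
  next
    fix a c assume "a \<in> {a. \<exists>b\<in>FF. finite (b - a)} \<and> a \<subseteq> c"
    then obtain b where "b \<in> FF" "finite (b - a)" "a \<subseteq> c" by blast
    moreover have "b - c \<subseteq> b - a" using calculation by blast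
    ultimately show "c \<in> {a. \<exists>b\<in>FF. finite (b - a)}" using finite_subset by blast
  next
    fix a c assume "a \<in> {a. \<exists>b\<in>FF. finite (b - a)} \<and> c \<in> {a. \<exists>b\<in>FF. finite (b - a)}"
    then obtain b1 b2 where "b1 \<in> FF" "finite (b1 - a)" "b2 \<in> FF" "finite (b2 - c)" by blast
    moreover have "(b1 \<inter> b2) - (a \<inter> c) \<subseteq> (b1 - a) \<union> (b2 - c)" by blast
    moreover have "finite ((b1 \<inter> b2) - (a \<inter> c))"
      using calculation by (meson finite_UnI finite_subset)
    ultimately show "a \<inter> c \<in> {a. \<exists>b\<in>FF. finite (b - a)}"
      using FFint by (intro CollectI bexI[of _ "b1 \<inter> b2"]) auto
  next
    fix a
    obtain x where x: "x \<in> X" "finite ({n. x \<in> f n} \<inter> a) \<or> finite ({n. x \<in> f n} - a)"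
      using claim by blast
    show "a \<in> {a. \<exists>b\<in>FF. finite (b - a)} \<or> - a \<in> {a. \<exists>b\<in>FF. finite (b - a)}"
    proof (cases "finite ({n. x \<in> f n} - a)")
      case True
      then show ?thesis using sing[OF x(1)] by blast
    next
      case False
      then have "finite ({n. x \<in> f n} - - a)" using x by (simp add: Diff_eq)
      then show ?thesis using sing[OF x(1)] by blast
    qed
  next
    fix n
    show "{n} \<notin> {a. \<exists>b\<in>FF. finite (b - a)}"
    proof
      assume "{n} \<in> {a. \<exists>b\<in>FF. finite (b - a)}"
      then obtain b where "b \<in> FF" "finite (b - {n})" by blast
      then show False using FFinf by (metis Diff_empty finite_Diff_insert)
    qed
  qed
  then have "(card_of B, card_of FF) \<in> ordLeq" using uw unfolding u_witness_def by blast
  moreover have "(card_of FF, card_of (Fpow X)) \<in> ordLeq" unfolding FF_def by (rule card_of_image)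
  moreover have "(card_of (Fpow X), card_of X) \<in> ordIso" using X by (rule card_of_Fpow_infinite)
  ultimately show ?thesis using ordLeq_transitive ordLeq_ordIso_trans by blast
qed



lemma countable_omega_sub:
  assumes om: "Omega_covers X \<U>"
  shows "\<exists>\<V>\<subseteq>\<U>. countable \<V> \<and> omega_cover X \<V>"
proof -
  have ofc: "omega_cover X \<U>" and op: "\<And>U. U \<in> \<U> \<Longrightarrow> openin (top_of_set X) U"
    using om unfolding Omega_covers_def open_fam_def by auto
  obtain BB :: "real set set" where BB: "countable BB" "\<And>C. C \<in> BB \<Longrightarrow> open C"
    "\<And>S. open S \<Longrightarrow> \<exists>U. U \<subseteq> BB \<and> S = \<Union>U"
    by (rule univ_second_countable) blast
  define I where "I = {K \<in> Fpow BB. \<exists>U\<in>\<U>. X \<inter> \<Union>K \<subseteq> U}"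
  define g where "g K = (SOME U. U \<in> \<U> \<and> X \<inter> \<Union>K \<subseteq> U)" for K
  have g: "g K \<in> \<U> \<and> X \<inter> \<Union>K \<subseteq> g K" if "K \<in> I" for K
  proof -
    have "\<exists>U. U \<in> \<U> \<and> X \<inter> \<Union>K \<subseteq> U" using that unfolding I_def by blast
    then show ?thesis unfolding g_def by (rule someI_ex)
  qed
  define V where "V = g ` I"
  have VU: "V \<subseteq> \<U>" using g unfolding V_def by blast
  have cV: "countable V"
  proof -
    have "countable (Fpow BB)" using BB(1) by (rule countable_Fpow)
    then have "countable I" unfolding I_def by (rule countable_subset[rotated]) blast
    then show ?thesis unfolding V_def by (rule countable_image)
  qed
  have key: "\<exists>W\<in>V. F \<subseteq> W" if F: "finite F" "F \<subseteq> X" for F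
  proof -
    obtain U where U: "U \<in> \<U>" "F \<subseteq> U" using omega_facts(3)[OF ofc F] by blast
    obtain T where T: "open T" "U = X \<inter> T" using op[OF U(1)] unfolding openin_open by blast
    have "\<forall>x\<in>F. \<exists>C. C \<in> BB \<and> x \<in> C \<and> C \<subseteq> T"
    proof
      fix x assume "x \<in> F"
      then have "x \<in> T" using U T by blast
      obtain W where "W \<subseteq> BB" "T = \<Union>W" using BB(3)[OF T(1)] by blast
      then show "\<exists>C. C \<in> BB \<and> x \<in> C \<and> C \<subseteq> T" using \<open>x \<in> T\<close> by blast
    qed
    then obtain k where k: "\<forall>x\<in>F. k x \<in> BB \<and> x \<in> k x \<and> k x \<subseteq> T"
      by (rule bchoice[elim_format]) blast
    have KI: "k ` F \<in> I" unfolding I_def Fpow_def using k F U T by blast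
    have "F \<subseteq> X \<inter> \<Union>(k ` F)" using k F by blast
    then have "F \<subseteq> g (k ` F)" using g[OF KI] by blast
    then show ?thesis unfolding V_def using KI by blast
  qed
  have "omega_cover X V"
    unfolding omega_cover_def is_cover_def
  proof (intro conjI ballI allI impI)
    show "U \<subseteq> X" "\<not> X \<subseteq> U" if "U \<in> V" for U using that VU omega_facts(1,2)[OF ofc] by blast+
    show "\<Union>V = X"
    proof
      show "\<Union>V \<subseteq> X" using VU omega_facts(1)[OF ofc] by blast
      show "X \<subseteq> \<Union>V"
      proof
        fix x assume "x \<in> X"
        then obtain W where "W \<in> V" "{x} \<subseteq> W" using key[of "{x}"] by auto
        then show "x \<in> \<Union>V" by blast
      qed
    qed
    show "\<exists>U\<in>V. F \<subseteq> U" if "finite F \<and> F \<subseteq> X" for F using key that by blast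
  qed
  then show ?thesis using VU cV by blast
qed

lemma lb_B:
  assumes uw: "u_witness B" and X: "infinite X" and ns: "\<not> Split B_Omega B_Lambda X"
  shows "(card_of B, card_of X) \<in> ordLeq"
proof -
  obtain \<U> where U: "B_Omega X \<U>" and nos: "\<not> (\<exists>\<A> \<B>. \<A> \<union> \<B> = \<U> \<and> \<A> \<inter> \<B> = {} \<and>
              (\<exists>\<A>'\<subseteq>\<A>. B_Lambda X \<A>') \<and> (\<exists>\<B>'\<subseteq>\<B>. B_Lambda X \<B>'))"
    using ns unfolding Split_def by blast
  have sub: "B_Lambda X \<A>" if "\<A> \<subseteq> \<U>" "large_cover X \<A>" for \<A>
    using U that unfolding B_Omega_def B_Lambda_def borel_fam_def
    by (meson countable_subset subsetD)
  show ?thesis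
  proof (rule core[OF uw X])
    show "omega_cover X \<U>" "countable \<U>" using U unfolding B_Omega_def by auto
    show "\<not>(\<exists>\<A> \<B>. \<A> \<union> \<B> = \<U> \<and> \<A> \<inter> \<B> = {} \<and> large_cover X \<A> \<and> large_cover X \<B>)"
    proof
      assume "\<exists>\<A> \<B>. \<A> \<union> \<B> = \<U> \<and> \<A> \<inter> \<B> = {} \<and> large_cover X \<A> \<and> large_cover X \<B>"
      then obtain A1 B1 where "A1 \<union> B1 = \<U>" "A1 \<inter> B1 = {}" "large_cover X A1" "large_cover X B1" by blast
      moreover have "B_Lambda X A1" "B_Lambda X B1" using sub calculation by blast+
      ultimately show False using nos by blast
    qed
  qed
qed

lemma lb_C:
  assumes uw: "u_witness B" and X: "infinite X" and ns: "\<not> Split C_Omega C_Lambda X"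
  shows "(card_of B, card_of X) \<in> ordLeq"
proof -
  obtain \<U> where U: "C_Omega X \<U>" and nos: "\<not> (\<exists>\<A> \<B>. \<A> \<union> \<B> = \<U> \<and> \<A> \<inter> \<B> = {} \<and>
              (\<exists>\<A>'\<subseteq>\<A>. C_Lambda X \<A>') \<and> (\<exists>\<B>'\<subseteq>\<B>. C_Lambda X \<B>'))"
    using ns unfolding Split_def by blast
  have sub: "C_Lambda X \<A>" if "\<A> \<subseteq> \<U>" "large_cover X \<A>" for \<A>
    using U that unfolding C_Omega_def C_Lambda_def clopen_fam_def
    by (meson countable_subset subsetD)
  show ?thesis
  proof (rule core[OF uw X])
    show "omega_cover X \<U>" "countable \<U>" using U unfolding C_Omega_def by auto
    show "\<not>(\<exists>\<A> \<B>. \<A> \<union> \<B> = \<U> \<and> \<A> \<inter> \<B> = {} \<and> large_cover X \<A> \<and> large_cover X \<B>)"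
    proof
      assume "\<exists>\<A> \<B>. \<A> \<union> \<B> = \<U> \<and> \<A> \<inter> \<B> = {} \<and> large_cover X \<A> \<and> large_cover X \<B>"
      then obtain A1 B1 where "A1 \<union> B1 = \<U>" "A1 \<inter> B1 = {}" "large_cover X A1" "large_cover X B1" by blast
      moreover have "C_Lambda X A1" "C_Lambda X B1" using sub calculation by blast+
      ultimately show False using nos by blast
    qed
  qed
qed

lemma lb_O:
  assumes uw: "u_witness B" and X: "infinite X" and ns: "\<not> Split Omega_covers Lambda_covers X"
  shows "(card_of B, card_of X) \<in> ordLeq"
proof -
  obtain \<U> where U: "Omega_covers X \<U>" and nos: "\<not> (\<exists>\<A> \<B>. \<A> \<union> \<B> = \<U> \<and> \<A> \<inter> \<B> = {} \<and>
              (\<exists>\<A>'\<subseteq>\<A>. Lambda_covers X \<A>') \<and> (\<exists>\<B>'\<subseteq>\<B>. Lambda_covers X \<B>'))"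
    using ns unfolding Split_def by blast
  obtain V where V: "V \<subseteq> \<U>" "countable V" "omega_cover X V" using countable_omega_sub[OF U] by blast
  have sub: "Lambda_covers X \<A>" if "\<A> \<subseteq> \<U>" "large_cover X \<A>" for \<A>
    using U that unfolding Omega_covers_def Lambda_covers_def open_fam_def by blast
  show ?thesis
  proof (rule core[OF uw X V(3) V(2)])
    show "\<not>(\<exists>\<A> \<B>. \<A> \<union> \<B> = V \<and> \<A> \<inter> \<B> = {} \<and> large_cover X \<A> \<and> large_cover X \<B>)"
    proof
      assume "\<exists>\<A> \<B>. \<A> \<union> \<B> = V \<and> \<A> \<inter> \<B> = {} \<and> large_cover X \<A> \<and> large_cover X \<B>"
      then obtain A1 B1 where h: "A1 \<union> B1 = V" "A1 \<inter> B1 = {}" "large_cover X A1" "large_cover X B1" by blast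
      have "A1 \<subseteq> \<U>" "B1 \<subseteq> \<U>" using h V by blast+
      then have L: "Lambda_covers X A1" "Lambda_covers X B1" using sub h by blast+
      have "(A1 \<union> (\<U> - V)) \<union> B1 = \<U>" using h V by blast
      moreover have "(A1 \<union> (\<U> - V)) \<inter> B1 = {}" using h by blast
      moreover have "\<exists>\<A>'\<subseteq>A1 \<union> (\<U> - V). Lambda_covers X \<A>'" using L by blast
      moreover have "\<exists>\<B>'\<subseteq>B1. Lambda_covers X \<B>'" using L by blast
      ultimately show False using nos by blast
    qed
  qed
qed



definition digit :: "nat set \<Rightarrow> nat \<Rightarrow> real" where
  "digit x j = (if j \<in> x then (2/3) * (1/3)^j else 0)"

definition emb :: "nat set \<Rightarrow> real" where
  "emb x = suminf (digit x)"

lemma geo_summable: "summable (\<lambda>j. (2/3) * (1/3::real)^j)"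
  by (intro summable_mult summable_geometric) simp

lemma geo_tail: "suminf (\<lambda>j. (2/3) * (1/3::real)^(j + m)) = (1/3)^m"
proof -
  have "(\<lambda>j. (2/3) * (1/3::real)^(j + m)) = (\<lambda>j. ((2/3) * (1/3)^m) * (1/3)^j)"
    by (simp add: power_add algebra_simps)
  moreover have "suminf (\<lambda>j. ((2/3) * (1/3::real)^m) * (1/3)^j) = ((2/3) * (1/3)^m) * suminf (\<lambda>j. (1/3::real)^j)"
    by (rule suminf_mult) (rule summable_geometric, simp)
  moreover have "suminf (\<lambda>j. (1/3::real)^j) = 3/2" by (subst suminf_geometric) simp_all
  ultimately show ?thesis by simp
qed

lemma tail_bound:
  fixes D :: "nat \<Rightarrow> real"
  assumes b: "\<And>j. \<bar>D j\<bar> \<le> (2/3) * (1/3)^j"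
  shows "summable D" "\<bar>suminf (\<lambda>j. D (j + m))\<bar> \<le> (1/3)^m"
proof -
  show sD: "summable D"
    by (rule summable_rabs_cancel, rule summable_comparison_test[OF _ geo_summable]) (use b in auto)
  have sg: "summable (\<lambda>j. (2/3) * (1/3::real)^(j + m))"
    using summable_ignore_initial_segment[OF geo_summable, of m] by simp
  have sDm: "summable (\<lambda>j. D (j + m))" using summable_ignore_initial_segment[OF sD] .
  have "suminf (\<lambda>j. D (j + m)) \<le> suminf (\<lambda>j. (2/3) * (1/3::real)^(j + m))"
    by (rule suminf_le[OF _ sDm sg]) (rule abs_le_D1[OF b])
  moreover have "suminf (\<lambda>j. - ((2/3) * (1/3::real)^(j + m))) \<le> suminf (\<lambda>j. D (j + m))"
  proof (rule suminf_le[OF _ summable_minus[OF sg] sDm])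
    fix n show "- ((2/3) * (1/3::real)^(n + m)) \<le> D (n + m)" using abs_le_D2[OF b, of "n+m"] by linarith
  qed
  moreover have "suminf (\<lambda>j. - ((2/3) * (1/3::real)^(j + m))) = - suminf (\<lambda>j. (2/3) * (1/3::real)^(j + m))"
    by (rule suminf_minus[OF sg])
  ultimately show "\<bar>suminf (\<lambda>j. D (j + m))\<bar> \<le> (1/3)^m" using geo_tail[of m] by linarith
qed

lemma digit_summable: "summable (digit x)"
  by (rule tail_bound(1)) (simp add: digit_def)

lemma sep:
  assumes "(n \<in> x) \<noteq> (n \<in> y)"
  shows "(1/3::real)^Suc n \<le> dist (emb x) (emb y)"
proof -
  define D where "D j = digit x j - digit y j" for j
  have bD: "\<bar>D j\<bar> \<le> (2/3) * (1/3)^j" for j unfolding D_def digit_def by auto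
  have sD: "summable D" using tail_bound(1)[OF bD] .
  have eq: "emb x - emb y = suminf D"
    unfolding emb_def D_def using suminf_diff[OF digit_summable digit_summable] by simp
  define k where "k = (LEAST j. (j \<in> x) \<noteq> (j \<in> y))"
  have kn: "k \<le> n" unfolding k_def by (rule Least_le) (rule assms)
  have kd: "(k \<in> x) \<noteq> (k \<in> y)" unfolding k_def by (rule LeastI) (rule assms)
  have below: "D j = 0" if "j < k" for j
  proof -
    have "(j \<in> x) = (j \<in> y)" using not_less_Least[OF that[unfolded k_def]] by blast
    then show ?thesis unfolding D_def digit_def by simp
  qed
  have split: "suminf D = suminf (\<lambda>j. D (j + Suc k)) + (\<Sum>i<Suc k. D i)"
    by (rule suminf_split_initial_segment[OF sD])
  have "(\<Sum>i<Suc k. D i) = D k" using below by simp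
  moreover have "\<bar>D k\<bar> = (2/3) * (1/3)^k" using kd unfolding D_def digit_def by auto
  moreover have "\<bar>suminf (\<lambda>j. D (j + Suc k))\<bar> \<le> (1/3)^Suc k" by (rule tail_bound(2)[OF bD])
  ultimately have h: "\<bar>D k\<bar> = (2/3) * (1/3)^k" "\<bar>suminf (\<lambda>j. D (j + Suc k))\<bar> \<le> (1/3)^k / 3"
    "suminf D = suminf (\<lambda>j. D (j + Suc k)) + D k" using split by simp_all
  have "(1/3::real)^Suc k = (1/3)^k / 3" by simp
  then have "(1/3::real)^Suc k \<le> \<bar>suminf D\<bar>" using h by arith
  moreover have "(1/3::real)^Suc n \<le> (1/3)^Suc k" by (rule power_decreasing) (use kn in auto)
  ultimately have "(1/3::real)^Suc n \<le> \<bar>suminf D\<bar>" by (rule order_trans[rotated])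
  then show ?thesis using eq by (simp only: dist_real_def)
qed

lemma emb_inj: "inj emb"
proof (rule injI)
  fix x y assume e: "emb x = emb y"
  show "x = y"
  proof (rule ccontr)
    assume "x \<noteq> y"
    then obtain n where "(n \<in> x) \<noteq> (n \<in> y)" by blast
    then have "(1/3::real)^Suc n \<le> dist (emb x) (emb y)" by (rule sep)
    moreover have "(0::real) < (1/3)^Suc n" by (rule zero_less_power) simp
    ultimately have "0 < dist (emb x) (emb y)" by linarith
    then show False using e by simp
  qed
qed



lemma base_facts:
  assumes "ultrafilter_base B"
  defines "G \<equiv> {a. \<exists>b\<in>B. finite (b - a)}"
  shows "\<And>b. b \<in> B \<Longrightarrow> infinite b" "{} \<notin> G" "UNIV \<in> G"
    "\<And>a c. a \<in> G \<Longrightarrow> a \<subseteq> c \<Longrightarrow> c \<in> G" "\<And>a c. a \<in> G \<Longrightarrow> c \<in> G \<Longrightarrow> a \<inter> c \<in> G"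
    "\<And>a. a \<in> G \<or> - a \<in> G" "\<And>n. {n} \<notin> G"
proof -
  have A: "\<forall>b\<in>B. infinite b" and N: "nonprincipal_ultrafilter G"
    using assms(1) unfolding ultrafilter_base_def G_def by simp_all
  note N' = N[unfolded nonprincipal_ultrafilter_def]
  show "\<And>b. b \<in> B \<Longrightarrow> infinite b" using A by simp
  show "{} \<notin> G" using N' by (elim conjE)
  show "UNIV \<in> G" using N' by (elim conjE)
  show "\<And>a c. a \<in> G \<Longrightarrow> a \<subseteq> c \<Longrightarrow> c \<in> G" using N' by (elim conjE) blast
  show "\<And>a c. a \<in> G \<Longrightarrow> c \<in> G \<Longrightarrow> a \<inter> c \<in> G" using N' by (elim conjE) blast
  show "\<And>a. a \<in> G \<or> - a \<in> G" using N' by (elim conjE) blast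
  show "\<And>n. {n} \<notin> G" using N' by (elim conjE) blast
qed

lemma Inter_in:
  assumes "ultrafilter_base B" and "finite S" and "S \<subseteq> {a. \<exists>b\<in>B. finite (b - a)}"
  shows "\<Inter>S \<in> {a. \<exists>b\<in>B. finite (b - a)}"
  using assms(2,3)
proof (induction S rule: finite_induct)
  case empty
  then show ?case using base_facts(3)[OF assms(1)] by simp
next
  case (insert x F)
  then show ?case using base_facts(5)[OF assms(1), of x "\<Inter>F"] by simp
qed

lemma base_in_G: "b \<in> B \<Longrightarrow> b \<in> {a. \<exists>b\<in>B. finite (b - a)}"
  by (intro CollectI bexI[of _ b]) auto

lemma split_infinite:
  fixes b :: "nat set"
  assumes "infinite b"
  shows "\<exists>c\<subseteq>b. infinite c \<and> infinite (b - c)"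
proof -
  let ?e = "enumerate b"
  have inj: "inj ?e" using inj_enumerate[OF assms] .
  have inb: "?e n \<in> b" for n using enumerate_in_set[OF assms] .
  let ?c = "?e ` {n. even n}"
  have "?c \<subseteq> b" using inb by blast
  moreover have "infinite {n::nat. even n}"
  proof -
    have "inj (\<lambda>n::nat. 2 * n)" by (auto simp: inj_on_def)
    then have "infinite (range (\<lambda>n::nat. 2 * n))" by (rule range_inj_infinite)
    moreover have "range (\<lambda>n::nat. 2 * n) \<subseteq> {n. even n}" by auto
    ultimately show ?thesis using finite_subset by blast
  qed
  then have "infinite ?c" using finite_imageD inj inj_on_subset subset_UNIV by blast
  moreover have "?e ` {n. odd n} \<subseteq> b - ?c" using inb inj by (auto dest: injD)
  moreover have "infinite {n::nat. odd n}"
  proof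
    assume "finite {n::nat. odd n}"
    then have "finite (Suc ` {n::nat. even n})" by (rule finite_subset[rotated]) auto
    then show False using \<open>infinite {n::nat. even n}\<close> by (simp add: finite_image_iff)
  qed
  then have "infinite (?e ` {n. odd n})" using finite_imageD inj inj_on_subset subset_UNIV by blast
  ultimately show ?thesis by (meson finite_subset)
qed

lemma base_infinite:
  assumes ub: "ultrafilter_base B"
  shows "infinite B"
proof
  assume fin: "finite B"
  let ?G = "{a. \<exists>b\<in>B. finite (b - a)}"
  have "B \<subseteq> ?G" using base_in_G by blast
  then have "\<Inter>B \<in> ?G" using Inter_in[OF ub fin] by blast
  then obtain b where b: "b \<in> B" "finite (b - \<Inter>B)" by blast
  have "infinite b" using base_facts(1)[OF ub b(1)] .
  then obtain c where c: "c \<subseteq> b" "infinite c" "infinite (b - c)" using split_infinite by blast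
  have "c \<in> ?G \<or> - c \<in> ?G" using base_facts(6)[OF ub] by blast
  then show False
  proof
    assume "c \<in> ?G"
    then obtain b' where b': "b' \<in> B" "finite (b' - c)" by blast
    have "b - c \<subseteq> (b - \<Inter>B) \<union> (b' - c)" using b' by blast
    then show False using b' b c by (meson finite_UnI finite_subset)
  next
    assume "- c \<in> ?G"
    then obtain b' where b': "b' \<in> B" "finite (b' - - c)" by blast
    have "c \<subseteq> (b - \<Inter>B) \<union> (b' - - c)" using b' c by blast
    then show False using b' b c by (meson finite_UnI finite_subset)
  qed
qed



lemma openin_borel: "openin (top_of_set X) U \<Longrightarrow> U \<in> sets (restrict_space borel X)"
proof -
  assume "openin (top_of_set X) U"
  then obtain T where T: "open T" "U = X \<inter> T" unfolding openin_open by blast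
  have "T \<in> sets borel" using T(1) by simp
  then show ?thesis unfolding sets_restrict_space using T(2) by blast
qed

lemma construction:
  assumes ub: "ultrafilter_base B"
  shows "\<exists>X. infinite X \<and> (card_of X, card_of B) \<in> ordIso \<and> \<not> Split B_Omega B_Lambda X
      \<and> \<not> Split Omega_covers Lambda_covers X \<and> \<not> Split C_Omega C_Lambda X"
proof -
  define G where "G = {a. \<exists>b\<in>B. finite (b - a)}"
  define S where "S = B \<union> range (\<lambda>n. - {n})"
  define X where "X = emb ` S"
  define V where "V n = emb ` {x\<in>S. n \<in> x}" for n
  define UU where "UU = range V"
  have Gf: "{} \<notin> G" "\<And>a. a \<in> G \<or> - a \<in> G" "\<And>n. {n} \<notin> G"
    using base_facts(2,6,7)[OF ub] unfolding G_def by blast+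
  have SG: "x \<in> G" if xS: "x \<in> S" for x
  proof (cases "x \<in> B")
    case True then show ?thesis unfolding G_def by (rule base_in_G)
  next
    case False
    then obtain n where "x = - {n}" using xS unfolding S_def by blast
    then show ?thesis using Gf(2)[of "{n}"] Gf(3)[of n] by simp
  qed
  have inj: "inj emb" by (rule emb_inj)
  have memV: "emb x \<in> V n \<longleftrightarrow> n \<in> x" if "x \<in> S" for x n
    unfolding V_def using that inj_image_mem_iff[OF inj] by blast
  have VX: "V n \<subseteq> X" for n unfolding V_def X_def by blast
  have opn: "openin (top_of_set X) (emb ` {x\<in>S. (n \<in> x) = t})" for n t
    unfolding openin_euclidean_subtopology_iff
  proof (intro conjI ballI)
    show "emb ` {x\<in>S. (n \<in> x) = t} \<subseteq> X" unfolding X_def by blast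
    fix p assume "p \<in> emb ` {x\<in>S. (n \<in> x) = t}"
    then obtain x where x: "x \<in> S" "(n \<in> x) = t" "p = emb x" by blast
    show "\<exists>e>0. \<forall>x'\<in>X. dist x' p < e \<longrightarrow> x' \<in> emb ` {x\<in>S. (n \<in> x) = t}"
    proof (intro exI[of _ "(1/3::real)^Suc n"] conjI ballI impI)
      show "(0::real) < (1/3)^Suc n" by (rule zero_less_power) simp
      fix q assume q: "q \<in> X" "dist q p < (1/3)^Suc n"
      then obtain y where y: "y \<in> S" "q = emb y" unfolding X_def by blast
      have "(n \<in> y) = t"
      proof (rule ccontr)
        assume "(n \<in> y) \<noteq> t"
        then have "(n \<in> y) \<noteq> (n \<in> x)" using x by simp
        then have "(1/3::real)^Suc n \<le> dist (emb y) (emb x)" by (rule sep)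
        then show False using q y x by simp
      qed
      then show "q \<in> emb ` {x\<in>S. (n \<in> x) = t}" using y by blast
    qed
  qed
  have Veq: "V n = emb ` {x\<in>S. (n \<in> x) = True}" for n unfolding V_def by simp
  have Vc: "X - V n = emb ` {x\<in>S. (n \<in> x) = False}" for n
  proof
    show "X - V n \<subseteq> emb ` {x\<in>S. (n \<in> x) = False}" unfolding X_def using memV by blast
    show "emb ` {x\<in>S. (n \<in> x) = False} \<subseteq> X - V n" unfolding X_def using memV by blast
  qed
  have clop: "openin (top_of_set X) (V n) \<and> closedin (top_of_set X) (V n)" for n
  proof
    show "openin (top_of_set X) (V n)" unfolding Veq by (rule opn)
    show "closedin (top_of_set X) (V n)" unfolding closedin_def topspace_euclidean_subtopology
      using VX[of n] opn[of n False] Vc[of n] by simp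
  qed
  have cover_ok: "omega_cover X UU"
    unfolding omega_cover_def is_cover_def
  proof (intro conjI ballI allI impI)
    fix U assume "U \<in> UU"
    then obtain n where n: "U = V n" unfolding UU_def by blast
    show "U \<subseteq> X" using VX n by blast
    have "- {n} \<in> S" unfolding S_def by blast
    moreover have "n \<notin> - {n}" by simp
    ultimately have "emb (- {n}) \<notin> V n" using memV by blast
    moreover have "emb (- {n}) \<in> X" unfolding X_def using \<open>- {n} \<in> S\<close> by blast
    ultimately show "\<not> X \<subseteq> U" using n by blast
  next
    show "\<Union>UU = X"
    proof
      show "\<Union>UU \<subseteq> X" unfolding UU_def using VX by blast
      show "X \<subseteq> \<Union>UU"
      proof
        fix p assume "p \<in> X"
        then obtain x where x: "x \<in> S" "p = emb x" unfolding X_def by blast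
        have "x \<noteq> {}" using SG[OF x(1)] Gf(1) by blast
        then obtain n where "n \<in> x" by blast
        then have "p \<in> V n" using memV x by blast
        then show "p \<in> \<Union>UU" unfolding UU_def by blast
      qed
    qed
  next
    fix F assume F: "finite F \<and> F \<subseteq> X"
    then obtain C where C: "C \<subseteq> S" "finite C" "F = emb ` C"
      unfolding X_def using finite_subset_image[of F emb S] by blast
    have "C \<subseteq> G" using C SG by blast
    then have "\<Inter>C \<in> G" using Inter_in[OF ub C(2)] unfolding G_def by blast
    then have "\<Inter>C \<noteq> {}" using Gf(1) by metis
    then obtain n where n: "n \<in> \<Inter>C" by blast
    have "F \<subseteq> V n" using C n memV by blast
    then show "\<exists>U\<in>UU. F \<subseteq> U" unfolding UU_def by blast
  qed
  have CO: "C_Omega X UU" unfolding C_Omega_def clopen_fam_def UU_def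
    using cover_ok clop unfolding UU_def by auto
  have BO: "B_Omega X UU" unfolding B_Omega_def borel_fam_def
    using CO openin_borel unfolding C_Omega_def clopen_fam_def by blast
  have OO: "Omega_covers X UU" unfolding Omega_covers_def open_fam_def
    using CO unfolding C_Omega_def clopen_fam_def by blast
  have nosplit: False if part: "A1 \<union> B1 = UU" "A1 \<inter> B1 = {}" and
    la: "A2 \<subseteq> A1" "large_cover X A2" and lb: "B2 \<subseteq> B1" "large_cover X B2" for A1 B1 A2 B2
  proof -
    define A where "A = {n. V n \<in> A1}"
    have "A \<in> G \<or> - A \<in> G" by (rule Gf(2))
    then show False
    proof
      assume "A \<in> G"
      then obtain b where b: "b \<in> B" "finite (b - A)" unfolding G_def by blast
      have bS: "b \<in> S" unfolding S_def using b by blast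
      have "emb b \<in> X" unfolding X_def using bS by blast
      then have inf: "infinite {U \<in> B2. emb b \<in> U}" using lb(2) unfolding large_cover_def by blast
      have "{U \<in> B2. emb b \<in> U} \<subseteq> V ` (b - A)"
      proof
        fix U assume U: "U \<in> {U \<in> B2. emb b \<in> U}"
        then have "U \<in> UU" using lb(1) part(1) by blast
        then obtain m where m: "U = V m" unfolding UU_def by blast
        have "m \<in> b" using U m memV[OF bS] by blast
        moreover have "V m \<notin> A1" using U m lb(1) part(2) by blast
        ultimately show "U \<in> V ` (b - A)" using m unfolding A_def by blast
      qed
      then show False using inf b(2) by (meson finite_imageI finite_subset)
    next
      assume "- A \<in> G"
      then obtain b where b: "b \<in> B" "finite (b - - A)" unfolding G_def by blast
      have bS: "b \<in> S" unfolding S_def using b by blast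
      have "emb b \<in> X" unfolding X_def using bS by blast
      then have inf: "infinite {U \<in> A2. emb b \<in> U}" using la(2) unfolding large_cover_def by blast
      have "{U \<in> A2. emb b \<in> U} \<subseteq> V ` (b - - A)"
      proof
        fix U assume U: "U \<in> {U \<in> A2. emb b \<in> U}"
        then have "U \<in> UU" using la(1) part(1) by blast
        then obtain m where m: "U = V m" unfolding UU_def by blast
        have "m \<in> b" using U m memV[OF bS] by blast
        moreover have "V m \<in> A1" using U m la(1) by blast
        ultimately show "U \<in> V ` (b - - A)" using m unfolding A_def by blast
      qed
      then show False using inf b(2) by (meson finite_imageI finite_subset)
    qed
  qed
  have s1: "\<not> Split B_Omega B_Lambda X"
  proof
    assume sp: "Split B_Omega B_Lambda X"
    have "\<exists>\<A> \<B>. \<A> \<union> \<B> = UU \<and> \<A> \<inter> \<B> = {} \<and>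
              (\<exists>\<A>'\<subseteq>\<A>. B_Lambda X \<A>') \<and> (\<exists>\<B>'\<subseteq>\<B>. B_Lambda X \<B>')"
      using sp[unfolded Split_def, rule_format, OF BO] .
    then obtain A1 B1 A2 B2 where h: "A1 \<union> B1 = UU" "A1 \<inter> B1 = {}" "A2 \<subseteq> A1" "B_Lambda X A2"
      "B2 \<subseteq> B1" "B_Lambda X B2" by (elim exE conjE) auto
    have "large_cover X A2" "large_cover X B2" using h(4,6) unfolding B_Lambda_def by simp_all
    then show False using nosplit[OF h(1,2,3) _ h(5)] by blast
  qed
  have s2: "\<not> Split Omega_covers Lambda_covers X"
  proof
    assume sp: "Split Omega_covers Lambda_covers X"
    have "\<exists>\<A> \<B>. \<A> \<union> \<B> = UU \<and> \<A> \<inter> \<B> = {} \<and>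
              (\<exists>\<A>'\<subseteq>\<A>. Lambda_covers X \<A>') \<and> (\<exists>\<B>'\<subseteq>\<B>. Lambda_covers X \<B>')"
      using sp[unfolded Split_def, rule_format, OF OO] .
    then obtain A1 B1 A2 B2 where h: "A1 \<union> B1 = UU" "A1 \<inter> B1 = {}" "A2 \<subseteq> A1" "Lambda_covers X A2"
      "B2 \<subseteq> B1" "Lambda_covers X B2" by (elim exE conjE) auto
    have "large_cover X A2" "large_cover X B2" using h(4,6) unfolding Lambda_covers_def by simp_all
    then show False using nosplit[OF h(1,2,3) _ h(5)] by blast
  qed
  have s3: "\<not> Split C_Omega C_Lambda X"
  proof
    assume sp: "Split C_Omega C_Lambda X"
    have "\<exists>\<A> \<B>. \<A> \<union> \<B> = UU \<and> \<A> \<inter> \<B> = {} \<and>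
              (\<exists>\<A>'\<subseteq>\<A>. C_Lambda X \<A>') \<and> (\<exists>\<B>'\<subseteq>\<B>. C_Lambda X \<B>')"
      using sp[unfolded Split_def, rule_format, OF CO] .
    then obtain A1 B1 A2 B2 where h: "A1 \<union> B1 = UU" "A1 \<inter> B1 = {}" "A2 \<subseteq> A1" "C_Lambda X A2"
      "B2 \<subseteq> B1" "C_Lambda X B2" by (elim exE conjE) auto
    have "large_cover X A2" "large_cover X B2" using h(4,6) unfolding C_Lambda_def by simp_all
    then show False using nosplit[OF h(1,2,3) _ h(5)] by blast
  qed
  have infB: "infinite B" by (rule base_infinite[OF ub])
  have infX: "infinite X"
  proof
    assume "finite X"
    then have "finite (emb ` B)" unfolding X_def S_def by (rule finite_subset[rotated]) blast
    then show False using infB finite_imageD inj inj_on_subset subset_UNIV by blast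
  qed
  have c1: "|X| =o |S|"
  proof -
    have "bij_betw emb S X" unfolding X_def bij_betw_def using inj inj_on_subset subset_UNIV by blast
    then have "bij_betw (inv_into S emb) X S" by (rule bij_betw_inv_into)
    then show ?thesis using card_of_ordIso by blast
  qed
  have c2: "|S| =o |B|"
  proof -
    have "|range (\<lambda>n::nat. - {n})| \<le>o |UNIV::nat set|" by (rule card_of_image)
    moreover have "|UNIV::nat set| \<le>o |B|" using infB infinite_iff_card_of_nat by blast
    ultimately have "|range (\<lambda>n::nat. - {n})| \<le>o |B|" by (rule ordLeq_transitive)
    then show ?thesis unfolding S_def using card_of_Un_infinite[OF infB] by blast
  qed
  have "|X| =o |B|" using c1 c2 by (rule ordIso_transitive)
  then show ?thesis using infX s1 s2 s3 by blast
qed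


lemma crit:
  assumes c: "\<And>B. ultrafilter_base B \<Longrightarrow> \<exists>X. infinite X \<and> (card_of X, card_of B) \<in> ordIso \<and> \<not> P X"
    and l: "\<And>B X. u_witness B \<Longrightarrow> infinite X \<Longrightarrow> \<not> P X \<Longrightarrow> (card_of B, card_of X) \<in> ordLeq"
  shows "critical_card_is_u P"
proof -
  obtain B where B: "u_witness B" using exists_u_witness by blast
  then have "ultrafilter_base B" unfolding u_witness_def by blast
  then obtain X where "infinite X" "(card_of X, card_of B) \<in> ordIso" "\<not> P X" using c by blast
  then show ?thesis unfolding critical_card_is_u_def using B l by blast
qed

theorem theorem5p3:
  shows "critical_card_is_u (Split B_Omega B_Lambda)
       \<and> critical_card_is_u (Split Omega_covers Lambda_covers)
       \<and> critical_card_is_u (Split C_Omega C_Lambda)"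
proof (intro conjI)
  show "critical_card_is_u (Split B_Omega B_Lambda)"
  proof (rule crit)
    fix B assume "ultrafilter_base B"
    then show "\<exists>X. infinite X \<and> (card_of X, card_of B) \<in> ordIso \<and> \<not> Split B_Omega B_Lambda X"
      using construction by blast
  qed (rule lb_B)
  show "critical_card_is_u (Split Omega_covers Lambda_covers)"
  proof (rule crit)
    fix B assume "ultrafilter_base B"
    then show "\<exists>X. infinite X \<and> (card_of X, card_of B) \<in> ordIso \<and> \<not> Split Omega_covers Lambda_covers X"
      using construction by blast
  qed (rule lb_O)
  show "critical_card_is_u (Split C_Omega C_Lambda)"
  proof (rule crit)
    fix B assume "ultrafilter_base B"
    then show "\<exists>X. infinite X \<and> (card_of X, card_of B) \<in> ordIso \<and> \<not> Split C_Omega C_Lambda X"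
      using construction by blast
  qed (rule lb_C)
qed

end
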